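(* Let $X$ be a Banach space, $(A_n)_{n\in\mathbb{Z}}$ bounded invertible operators on $X$, $(P_n)_{n\in\mathbb{Z}}$ bounded operators on $X$, and $f_n\colon X\to X$ maps. Assume: there are $(\mu_n),(\gamma_n)\subset[0,\infty)$ with $|f_n(x)|\le\mu_n$ and $|f_n(x_1)-f_n(x_2)|\le\gamma_n|x_1-x_2|$ for all $n,x,x_1,x_2$; $\sup_m\sum_n|\mathcal G(m,n)|\mu_{n-1}<\infty$; $\sup_m\sum_n|\mathcal G(m,n)|\gamma_{n-1}<1$; $|A_n^{-1}|\gamma_n<1$ for all $n$; each $f_n$ is $C^r$ for some $r\ge1$; and for every $n\in\mathbb{Z}$, \[ \sum_{k<n}|\mathcal G(n,k+1)|\gamma_k\prod_{j=k}^{n-1}\frac{|A_j^{-1}|}{1-\gamma_j|A_j^{-1}|}+\sum_{k>n}|\mathcal G(n,k+1)|\gamma_k\prod_{j=n}^{k-1}(|A_j|+\gamma_j)+|\mathcal G(n,n+1)|\gamma_n<1. \] Then the maps $H_n$ and $\bar H_n$ (defined in the context) are of class $C^1$ for every $n\in\mathbb{Z}$.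
   Context: $\mathcal A(m,n)=A_{m-1}\cdots A_n$ ($m>n$), $\mathrm{Id}$ ($m=n$), $A_m^{-1}\cdots A_{n-1}^{-1}$ ($m<n$); $\mathcal G(m,n)=\mathcal A(m,n)P_n$ for $m\ge n$ and $-\mathcal A(m,n)(\mathrm{Id}-P_n)$ for $m<n$. $x_2(k,n,\xi)$ is the solution of $x_{k+1}=A_kx_k+f_k(x_k)$ with $x_2(n,n,\xi)=\xi$ (defined for all $k$). Set $\bar h_n(\xi)=-\sum_{k\in\mathbb{Z}}\mathcal G(n,k+1)f_k(x_2(k,n,\xi))$ and $\bar H_n(\xi)=\xi+\bar h_n(\xi)$; under the stated hypotheses it is known that $\bar H_n$ is a homeomorphism of $X$ taking solutions of $x_{k+1}=A_kx_k+f_k(x_k)$ to solutions of $x_{k+1}=A_kx_k$, and its inverse $H_n(\xi)=\xi+h_n(\xi)$ (with $h_n$ bounded and continuous) takes solutions of the linear system to those of the nonlinear system. *)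

theory Defs
  imports "HOL-Analysis.Analysis"
begin

text \<open>Inverse of a bounded linear operator (meaningful when it is invertible).\<close>
definition binv :: "('a::real_normed_vector \<Rightarrow>\<^sub>L 'a) \<Rightarrow> ('a \<Rightarrow>\<^sub>L 'a)" where
  "binv T = (SOME S. T o\<^sub>L S = id_blinfun \<and> S o\<^sub>L T = id_blinfun)"

fun cocyc_fwd :: "(int \<Rightarrow> ('a::real_normed_vector \<Rightarrow>\<^sub>L 'a)) \<Rightarrow> int \<Rightarrow> nat \<Rightarrow> ('a \<Rightarrow>\<^sub>L 'a)" where
  "cocyc_fwd A n 0 = id_blinfun"
| "cocyc_fwd A n (Suc k) = A (n + int k) o\<^sub>L cocyc_fwd A n k"

fun cocyc_bwd :: "(int \<Rightarrow> ('a::real_normed_vector \<Rightarrow>\<^sub>L 'a)) \<Rightarrow> int \<Rightarrow> nat \<Rightarrow> ('a \<Rightarrow>\<^sub>L 'a)" where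
  "cocyc_bwd A m 0 = id_blinfun"
| "cocyc_bwd A m (Suc k) = cocyc_bwd A m k o\<^sub>L binv (A (m + int k))"

definition cocycle :: "(int \<Rightarrow> ('a::real_normed_vector \<Rightarrow>\<^sub>L 'a)) \<Rightarrow> int \<Rightarrow> int \<Rightarrow> ('a \<Rightarrow>\<^sub>L 'a)" where
  "cocycle A m n = (if n \<le> m then cocyc_fwd A n (nat (m - n)) else cocyc_bwd A m (nat (n - m)))"

definition green :: "(int \<Rightarrow> ('a::real_normed_vector \<Rightarrow>\<^sub>L 'a)) \<Rightarrow> (int \<Rightarrow> ('a \<Rightarrow>\<^sub>L 'a)) \<Rightarrow> int \<Rightarrow> int \<Rightarrow> ('a \<Rightarrow>\<^sub>L 'a)" where
  "green A P m n = (if n \<le> m then cocycle A m n o\<^sub>L P n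
                    else - (cocycle A m n o\<^sub>L (id_blinfun - P n)))"

definition x2 :: "(int \<Rightarrow> ('a::real_normed_vector \<Rightarrow>\<^sub>L 'a)) \<Rightarrow> (int \<Rightarrow> 'a \<Rightarrow> 'a) \<Rightarrow> int \<Rightarrow> int \<Rightarrow> 'a \<Rightarrow> 'a" where
  "x2 A f k n \<xi> = (THE x. x n = \<xi> \<and> (\<forall>j. x (j + 1) = A j (x j) + f j (x j))) k"

definition hbar :: "(int \<Rightarrow> ('a::real_normed_vector \<Rightarrow>\<^sub>L 'a)) \<Rightarrow> (int \<Rightarrow> ('a \<Rightarrow>\<^sub>L 'a)) \<Rightarrow> (int \<Rightarrow> 'a \<Rightarrow> 'a) \<Rightarrow> int \<Rightarrow> 'a \<Rightarrow> 'a" where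
  "hbar A P f n \<xi> = - infsum (\<lambda>k. green A P n (k + 1) (f k (x2 A f k n \<xi>))) UNIV"

definition Hbar :: "(int \<Rightarrow> ('a::real_normed_vector \<Rightarrow>\<^sub>L 'a)) \<Rightarrow> (int \<Rightarrow> ('a \<Rightarrow>\<^sub>L 'a)) \<Rightarrow> (int \<Rightarrow> 'a \<Rightarrow> 'a) \<Rightarrow> int \<Rightarrow> 'a \<Rightarrow> 'a" where
  "Hbar A P f n \<xi> = \<xi> + hbar A P f n \<xi>"

definition H :: "(int \<Rightarrow> ('a::real_normed_vector \<Rightarrow>\<^sub>L 'a)) \<Rightarrow> (int \<Rightarrow> ('a \<Rightarrow>\<^sub>L 'a)) \<Rightarrow> (int \<Rightarrow> 'a \<Rightarrow> 'a) \<Rightarrow> int \<Rightarrow> 'a \<Rightarrow> 'a" where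
  "H A P f n = inv (Hbar A P f n)"

definition C1 :: "('a::real_normed_vector \<Rightarrow> 'b::real_normed_vector) \<Rightarrow> bool" where
  "C1 g \<longleftrightarrow> (\<exists>D :: 'a \<Rightarrow> ('a \<Rightarrow>\<^sub>L 'b).
      (\<forall>x. (g has_derivative blinfun_apply (D x)) (at x)) \<and> continuous_on UNIV D)"

end

theory Submission
  imports Defs
begin



lemma deriv_norm_le_lip:
  fixes g :: "'a::real_normed_vector \<Rightarrow> 'b::real_normed_vector"
  assumes d: "(g has_derivative blinfun_apply D) (at x)"
    and L: "\<And>a b. norm (g a - g b) \<le> L * norm (a - b)" and L0: "0 \<le> L"
  shows "norm D \<le> L"
proof (rule norm_blinfun_bound[OF L0])
  fix h
  show "norm (D h) \<le> L * norm h"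
  proof (cases "h = 0")
    case True then show ?thesis by simp
  next
    case False
    hence hp: "norm h > 0" by simp
    show ?thesis
    proof (rule field_le_epsilon)
      fix e :: real assume e: "0 < e"
      have "\<forall>e>0. \<exists>d>0. \<forall>y\<in>UNIV. norm (y - x) < d \<longrightarrow> norm (g y - g x - D (y - x)) \<le> e * norm (y - x)"
        using d unfolding has_derivative_within_alt by blast
      then obtain d where d0: "d > 0" and dd: "\<And>y. norm (y - x) < d \<Longrightarrow> norm (g y - g x - D (y - x)) \<le> (e / norm h) * norm (y - x)"
        using e hp by (meson divide_pos_pos UNIV_I)
      define t where "t = d / (2 * norm h)"
      have t0: "t > 0" using d0 hp by (simp add: t_def)
      have ny: "norm ((x + t *\<^sub>R h) - x) = t * norm h" using t0 by simp
      also have "\<dots> = d / 2" using hp by (simp add: t_def)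
      finally have dlt: "norm ((x + t *\<^sub>R h) - x) < d" using d0 by simp
      have eqD: "D ((x + t *\<^sub>R h) - x) = t *\<^sub>R D h" by (simp add: blinfun.scaleR_right)
      from dd[OF dlt] have 1: "norm (g (x + t *\<^sub>R h) - g x - t *\<^sub>R D h) \<le> (e / norm h) * (t * norm h)"
        by (metis ny eqD)
      have 2: "norm (g (x + t *\<^sub>R h) - g x) \<le> L * (t * norm h)"
        using L[of "x + t *\<^sub>R h" x] t0 by simp
      have "norm (t *\<^sub>R D h) \<le> norm (g (x + t *\<^sub>R h) - g x) + norm (g (x + t *\<^sub>R h) - g x - t *\<^sub>R D h)"
        using norm_triangle_ineq4[of "g (x + t *\<^sub>R h) - g x" "g (x + t *\<^sub>R h) - g x - t *\<^sub>R D h"] by simp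
      also have "\<dots> \<le> L * (t * norm h) + (e / norm h) * (t * norm h)" using 1 2 by linarith
      also have "\<dots> = t * (L * norm h + e)" using hp by (simp add: field_simps)
      finally have "t * norm (D h) \<le> t * (L * norm h + e)" using t0 by simp
      thus "norm (D h) \<le> L * norm h + e" using t0 by simp
    qed
  qed
qed

lemma blinfun_compose_id_right[simp]: "f o\<^sub>L id_blinfun = f"
  by (rule blinfun_eqI) simp
lemma blinfun_compose_assoc: "(a o\<^sub>L b) o\<^sub>L c = a o\<^sub>L (b o\<^sub>L c)"
  by (rule blinfun_eqI) simp
lemma blinfun_compose_id_left[simp]: "id_blinfun o\<^sub>L f = f"
  by (rule blinfun_eqI) simp

lemma binv_props:
  fixes T :: "'a::real_normed_vector \<Rightarrow>\<^sub>L 'a"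
  assumes "T o\<^sub>L S = id_blinfun" "S o\<^sub>L T = id_blinfun"
  shows "T o\<^sub>L binv T = id_blinfun" "binv T o\<^sub>L T = id_blinfun" "binv T = S"
proof -
  have ex: "\<exists>S. T o\<^sub>L S = id_blinfun \<and> S o\<^sub>L T = id_blinfun" using assms by blast
  have *: "T o\<^sub>L binv T = id_blinfun \<and> binv T o\<^sub>L T = id_blinfun"
    unfolding binv_def by (rule someI_ex[OF ex])
  thus "T o\<^sub>L binv T = id_blinfun" "binv T o\<^sub>L T = id_blinfun" by auto
  have "binv T = binv T o\<^sub>L (T o\<^sub>L S)" using assms by simp
  also have "\<dots> = (binv T o\<^sub>L T) o\<^sub>L S" by (simp only: blinfun_compose_assoc)
  also have "\<dots> = S" using * by simp
  finally show "binv T = S" .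
qed

lemma inv_perturb:
  fixes A B E :: "'a::banach \<Rightarrow>\<^sub>L 'a"
  assumes AB: "A o\<^sub>L B = id_blinfun" and BA: "B o\<^sub>L A = id_blinfun"
    and small: "norm B * norm E < 1"
  shows "(A + E) o\<^sub>L binv (A + E) = id_blinfun" "binv (A + E) o\<^sub>L (A + E) = id_blinfun"
    "norm (binv (A + E)) \<le> norm B / (1 - norm B * norm E)"
proof -
  define c where "c = norm B * norm E"
  have c0: "0 \<le> c" "c < 1" using small by (auto simp: c_def)
  have ABx: "A (B y) = y" for y using AB by (metis blinfun_apply_blinfun_compose blinfun_apply_id_blinfun id_apply)
  have BAx: "B (A y) = y" for y using BA by (metis blinfun_apply_blinfun_compose blinfun_apply_id_blinfun id_apply)
  have lipE: "norm (B (E x) - B (E z)) \<le> c * norm (x - z)" for x z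
  proof -
    have "B (E x) - B (E z) = B (E (x - z))" by (simp add: blinfun.diff_right)
    also have "norm \<dots> \<le> norm B * norm (E (x - z))" by (rule norm_blinfun)
    also have "\<dots> \<le> norm B * (norm E * norm (x - z))" by (simp add: mult_left_mono norm_blinfun)
    finally show ?thesis by (simp add: c_def mult.assoc)
  qed
  have eq: "(A + E) x = y \<longleftrightarrow> x = B y - B (E x)" for x y
  proof
    assume "(A + E) x = y"
    hence "B y = B (A x) + B (E x)" by (auto simp: blinfun.add_left blinfun.add_right)
    thus "x = B y - B (E x)" using BAx by simp
  next
    assume "x = B y - B (E x)"
    hence "A x = y - A (B (E x))" by (metis ABx blinfun.diff_right)
    thus "(A + E) x = y" using ABx by (simp add: blinfun.add_left)
  qed
  have ex1: "\<exists>!x. (A + E) x = y" for y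
  proof -
    have "\<exists>!x. (\<lambda>x. B y - B (E x)) x = x"
    proof (rule banach_fix_type[OF c0])
      show "\<forall>x z. dist (B y - B (E x)) (B y - B (E z)) \<le> c * dist x z"
        using lipE by (simp add: dist_norm norm_minus_commute)
    qed
    thus ?thesis using eq by metis
  qed
  define S where "S y = (THE x. (A + E) x = y)" for y
  have S1: "(A + E) (S y) = y" for y unfolding S_def by (rule theI') (rule ex1)
  have S2: "S ((A + E) x) = x" for x unfolding S_def by (rule the_equality) (use ex1 in blast)+
  have bnd: "norm (S y) \<le> norm B / (1 - c) * norm y" for y
  proof -
    have "S y = B y - B (E (S y))" using eq S1 by blast
    hence "norm (S y) \<le> norm (B y) + norm (B (E (S y)))" by (metis norm_triangle_ineq4)
    also have "\<dots> \<le> norm B * norm y + c * norm (S y)"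
      using lipE[of "S y" 0] norm_blinfun[of B y] by simp
    finally have "(1 - c) * norm (S y) \<le> norm B * norm y" by (simp add: algebra_simps)
    thus ?thesis using c0 by (simp add: field_simps)
  qed
  have lin: "linear S"
  proof
    fix x z show "S (x + z) = S x + S z"
      by (metis S1 S2 blinfun.add_right)
  next
    fix r and x :: 'a show "S (r *\<^sub>R x) = r *\<^sub>R S x"
      by (metis S1 S2 blinfun.scaleR_right)
  qed
  have bl: "bounded_linear S"
    using lin bnd by (intro bounded_linear_intro[where K="norm B / (1 - c)"]) (auto simp: linear_add linear_scale mult.commute)
  define SB where "SB = Blinfun S"
  have SBa: "blinfun_apply SB = S" unfolding SB_def using bl by (rule bounded_linear_Blinfun_apply)
  have i1: "(A + E) o\<^sub>L SB = id_blinfun" by (rule blinfun_eqI) (simp add: SBa S1)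
  have i2: "SB o\<^sub>L (A + E) = id_blinfun" by (rule blinfun_eqI) (simp add: SBa S2)
  have beq: "binv (A + E) = SB" using binv_props(3)[OF i1 i2] .
  show "(A + E) o\<^sub>L binv (A + E) = id_blinfun" "binv (A + E) o\<^sub>L (A + E) = id_blinfun"
    using i1 i2 beq by auto
  have "norm SB \<le> norm B / (1 - c)"
    apply (rule norm_blinfun_bound) using c0 apply simp unfolding SBa by (rule bnd)
  thus "norm (binv (A + E)) \<le> norm B / (1 - norm B * norm E)" using beq by (simp add: c_def)
qed




lemma idcontr_bij:
  fixes h :: "'a::banach \<Rightarrow> 'a"
  assumes c: "0 \<le> c" "c < 1" and L: "\<And>a b. norm (h a - h b) \<le> c * norm (a - b)"
  shows "bij (\<lambda>x. x + h x)"
    and "\<And>y1 y2. norm (inv (\<lambda>x. x + h x) y1 - inv (\<lambda>x. x + h x) y2) \<le> 1 / (1 - c) * norm (y1 - y2)"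
proof -
  let ?F = "\<lambda>x. x + h x"
  have inj: "inj ?F"
  proof (rule injI)
    fix x1 x2 assume eq: "x1 + h x1 = x2 + h x2"
    hence "x1 - x2 = h x2 - h x1" by (simp add: algebra_simps)
    hence "norm (x1 - x2) \<le> c * norm (x1 - x2)" using L[of x2 x1] by (simp add: norm_minus_commute)
    hence "(1 - c) * norm (x1 - x2) \<le> 0" by (simp add: algebra_simps)
    hence "norm (x1 - x2) \<le> 0" using c by (simp add: mult_le_0_iff)
    thus "x1 = x2" by simp
  qed
  have surj: "surj ?F"
  proof -
    have "\<exists>x. ?F x = y" for y
    proof -
      have "\<exists>!x. (\<lambda>x. y - h x) x = x"
        by (rule banach_fix_type[OF c]) (use L in \<open>simp add: dist_norm norm_minus_commute\<close>)
      then obtain x where "y - h x = x" by blast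
      hence "?F x = y" by (simp add: algebra_simps)
      thus ?thesis by blast
    qed
    thus ?thesis by (metis surj_def)
  qed
  show "bij ?F" using inj surj by (simp add: bij_def)
  fix y1 y2
  define x1 where "x1 = inv ?F y1"
  define x2 where "x2 = inv ?F y2"
  have e1: "?F x1 = y1" unfolding x1_def using surj_f_inv_f[OF surj, of y1] by simp
  have e2: "?F x2 = y2" unfolding x2_def using surj_f_inv_f[OF surj, of y2] by simp
  have "x1 - x2 = (y1 - y2) - (h x1 - h x2)" using e1 e2 by (auto simp: algebra_simps)
  hence "norm (x1 - x2) \<le> norm (y1 - y2) + norm (h x1 - h x2)" by (metis norm_triangle_ineq4)
  also have "\<dots> \<le> norm (y1 - y2) + c * norm (x1 - x2)" using L by simp
  finally have "(1 - c) * norm (x1 - x2) \<le> norm (y1 - y2)" by (simp add: algebra_simps)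
  thus "norm (x1 - x2) \<le> 1 / (1 - c) * norm (y1 - y2)" using c by (simp add: field_simps)
qed

lemma cont_binv:
  fixes M :: "'a::real_normed_vector \<Rightarrow> ('b::real_normed_vector \<Rightarrow>\<^sub>L 'b)"
  assumes cM: "continuous_on UNIV M"
    and i1: "\<And>y. M y o\<^sub>L binv (M y) = id_blinfun" and i2: "\<And>y. binv (M y) o\<^sub>L M y = id_blinfun"
    and K: "\<And>y. norm (binv (M y)) \<le> K"
  shows "continuous_on UNIV (\<lambda>y. binv (M y))"
proof -
  have K0: "0 \<le> K" using K[of undefined] norm_ge_zero order_trans by blast
  have key: "norm (binv (M y) - binv (M z)) \<le> K * K * norm (M y - M z)" for y z
  proof -
    have "binv (M y) - binv (M z) = binv (M y) o\<^sub>L (M z - M y) o\<^sub>L binv (M z)"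
    proof -
      have "binv (M y) o\<^sub>L (M z - M y) o\<^sub>L binv (M z)
          = (binv (M y) o\<^sub>L M z o\<^sub>L binv (M z)) - (binv (M y) o\<^sub>L M y o\<^sub>L binv (M z))"
        by (rule blinfun_eqI) (simp add: blinfun.diff_left blinfun.diff_right)
      also have "\<dots> = binv (M y) - binv (M z)"
        using i1[of z] i2[of y] by (simp add: blinfun_compose_assoc)
      finally show ?thesis by simp
    qed
    also have "norm \<dots> \<le> norm (binv (M y) o\<^sub>L (M z - M y)) * norm (binv (M z))"
      by (rule norm_blinfun_compose)
    also have "\<dots> \<le> (norm (binv (M y)) * norm (M z - M y)) * norm (binv (M z))"
      by (intro mult_right_mono norm_blinfun_compose) simp
    also have "\<dots> \<le> (K * norm (M z - M y)) * K"
      using K K0 by (intro mult_mono) auto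
    finally show ?thesis by (simp add: norm_minus_commute mult_ac)
  qed
  show ?thesis
    unfolding continuous_on_iff
  proof (intro ballI allI impI)
    fix x and e :: real assume "0 < e"
    have KK: "0 < K * K + 1" using zero_le_square[of K] by linarith
    hence "0 < e / (K * K + 1)" using \<open>0 < e\<close> by simp
    then obtain d where d: "d > 0" "\<And>x'. dist x' x < d \<Longrightarrow> dist (M x') (M x) < e / (K * K + 1)"
      using cM unfolding continuous_on_iff by blast
    have "\<forall>x'. dist x' x < d \<longrightarrow> dist (binv (M x')) (binv (M x)) < e"
    proof (intro allI impI)
      fix x' assume "dist x' x < d"
      hence dm: "norm (M x' - M x) < e / (K * K + 1)" using d by (simp add: dist_norm)
      have "dist (binv (M x')) (binv (M x)) \<le> K * K * norm (M x' - M x)" using key by (simp add: dist_norm)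
      also have "\<dots> \<le> (K * K + 1) * norm (M x' - M x)" by (simp add: mult_right_mono)
      also have "\<dots> < (K * K + 1) * (e / (K * K + 1))" 
        using dm KK by (intro mult_strict_left_mono) auto
      also have "\<dots> = e" using KK by simp
      finally show "dist (binv (M x')) (binv (M x)) < e" .
    qed
    thus "\<exists>d>0. \<forall>x'\<in>UNIV. dist x' x < d \<longrightarrow> dist (binv (M x')) (binv (M x)) < e"
      using d(1) by auto
  qed
qed

definition Iset :: "nat \<Rightarrow> int set" where "Iset N = {-int N..int N}"

lemma finite_Iset[simp]: "finite (Iset N)" by (simp add: Iset_def)

lemma filterlim_Iset: "filterlim Iset (finite_subsets_at_top UNIV) sequentially"
  unfolding filterlim_finite_subsets_at_top
proof (intro allI impI)
  fix X :: "int set" assume "finite X \<and> X \<subseteq> UNIV"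
  hence fX: "finite X" by simp
  define m where "m = sum abs X"
  have m: "\<And>x. x \<in> X \<Longrightarrow> \<bar>x\<bar> \<le> m"
    unfolding m_def by (rule member_le_sum) (use fX in auto)
  show "\<forall>\<^sub>F y in sequentially. finite (Iset y) \<and> X \<subseteq> Iset y \<and> Iset y \<subseteq> UNIV"
    unfolding eventually_sequentially
  proof (intro exI allI impI)
    fix N assume "nat m \<le> N"
    hence "X \<subseteq> Iset N" using m by (force simp: Iset_def abs_le_iff)
    thus "finite (Iset N) \<and> X \<subseteq> Iset N \<and> Iset N \<subseteq> UNIV" by simp
  qed
qed

lemma has_sum_Iset:
  assumes "(g has_sum S) UNIV"
  shows "(\<lambda>N. sum g (Iset N)) \<longlonglongrightarrow> S"
proof -
  have "(sum g \<longlongrightarrow> S) (finite_subsets_at_top UNIV)" using assms by (simp add: has_sum_def)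
  from tendsto_compose_filtermap[THEN iffD1] filterlim_compose[OF this filterlim_Iset]
  show ?thesis by (simp add: o_def)
qed

lemma abs_cmp:
  assumes "b summable_on A" "\<And>x. x \<in> A \<Longrightarrow> norm (f x) \<le> (b x :: real)"
  shows "(\<lambda>x. norm (f x)) summable_on A"
  by (rule summable_on_comparison_test[OF assms(1)]) (use assms(2) in auto)

lemma tail_bound:
  fixes v :: "int \<Rightarrow> 'b::banach"
  assumes vb: "\<And>k. norm (v k) \<le> b k" and sb: "b summable_on UNIV" and fF: "finite F"
  shows "norm ((\<Sum>\<^sub>\<infinity>k. v k) - sum v F) \<le> (\<Sum>\<^sub>\<infinity>k. b k) - sum b F"
proof -
  have sv: "v summable_on UNIV"
    by (rule abs_summable_summable, rule abs_cmp[OF sb]) (use vb in auto)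
  have svC: "v summable_on (-F)" by (rule summable_on_subset_banach[OF sv]) auto
  have sbC: "b summable_on (-F)" by (rule summable_on_subset_banach[OF sb]) auto
  have nvC: "(\<lambda>k. norm (v k)) summable_on (-F)"
    by (rule abs_cmp[OF sbC]) (use vb in auto)
  have U: "UNIV = F \<union> (-F)" by auto
  have ev: "(\<Sum>\<^sub>\<infinity>k. v k) = sum v F + (\<Sum>\<^sub>\<infinity>k\<in>-F. v k)"
    by (subst U, subst infsum_Un_disjoint) (use fF svC in auto)
  have eb: "(\<Sum>\<^sub>\<infinity>k. b k) = sum b F + (\<Sum>\<^sub>\<infinity>k\<in>-F. b k)"
    by (subst U, subst infsum_Un_disjoint) (use fF sbC in auto)
  have "norm ((\<Sum>\<^sub>\<infinity>k. v k) - sum v F) = norm (\<Sum>\<^sub>\<infinity>k\<in>-F. v k)" using ev by simp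
  also have "\<dots> \<le> (\<Sum>\<^sub>\<infinity>k\<in>-F. norm (v k))" by (rule norm_infsum_bound[OF nvC])
  also have "\<dots> \<le> (\<Sum>\<^sub>\<infinity>k\<in>-F. b k)" by (rule infsum_mono[OF nvC sbC]) (use vb in auto)
  finally show ?thesis using eb by simp
qed

lemma termwise_C1:
  fixes u :: "int \<Rightarrow> 'a::banach \<Rightarrow> 'b::banach" and U :: "int \<Rightarrow> 'a \<Rightarrow> ('a \<Rightarrow>\<^sub>L 'b)"
  assumes du: "\<And>k x. (u k has_derivative blinfun_apply (U k x)) (at x)"
    and cU: "\<And>k. continuous_on UNIV (U k)"
    and bU: "\<And>k x. norm (U k x) \<le> b k" and sb: "b summable_on UNIV"
    and bu: "\<And>k x. norm (u k x) \<le> c k" and sc: "c summable_on UNIV"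
  shows "((\<lambda>x. \<Sum>\<^sub>\<infinity>k. u k x) has_derivative blinfun_apply (\<Sum>\<^sub>\<infinity>k. U k x)) (at x)"
    and "continuous_on UNIV (\<lambda>x. \<Sum>\<^sub>\<infinity>k. U k x)"
    and "norm (\<Sum>\<^sub>\<infinity>k. U k x) \<le> (\<Sum>\<^sub>\<infinity>k. b k)"
proof -
  have tb: "norm ((\<Sum>\<^sub>\<infinity>k. U k y) - sum (\<lambda>k. U k y) (Iset N)) \<le> (\<Sum>\<^sub>\<infinity>k. b k) - sum b (Iset N)" for y N
    by (rule tail_bound) (use bU sb in auto)
  have tail0: "(\<lambda>N. (\<Sum>\<^sub>\<infinity>k. b k) - sum b (Iset N)) \<longlonglongrightarrow> 0"
  proof -
    have "(\<lambda>N. sum b (Iset N)) \<longlonglongrightarrow> (\<Sum>\<^sub>\<infinity>k. b k)" using has_sum_Iset sb has_sum_infsum by blast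
    from tendsto_diff[OF tendsto_const[of "\<Sum>\<^sub>\<infinity>k. b k"] this] show ?thesis by simp
  qed
  have unif: "\<forall>\<^sub>F N in sequentially. \<forall>y. norm ((\<Sum>\<^sub>\<infinity>k. U k y) - sum (\<lambda>k. U k y) (Iset N)) < e"
    if "e > 0" for e
  proof -
    have "\<forall>\<^sub>F N in sequentially. (\<Sum>\<^sub>\<infinity>k. b k) - sum b (Iset N) < e"
      using order_tendstoD(2)[OF tail0 that] .
    thus ?thesis by eventually_elim (use tb order_le_less_trans in blast)
  qed
  have limu: "(\<lambda>N. sum (\<lambda>k. u k y) (Iset N)) \<longlonglongrightarrow> (\<Sum>\<^sub>\<infinity>k. u k y)" for y
  proof -
    have "(\<lambda>k. u k y) summable_on UNIV"
      by (rule abs_summable_summable, rule abs_cmp[OF sc]) (use bu in auto)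
    thus ?thesis using has_sum_Iset has_sum_infsum by blast
  qed
  have "\<exists>g. \<forall>y\<in>UNIV. (\<lambda>N. sum (\<lambda>k. u k y) (Iset N)) \<longlonglongrightarrow> g y \<and>
          (g has_derivative blinfun_apply (\<Sum>\<^sub>\<infinity>k. U k y)) (at y within UNIV)"
  proof (rule has_derivative_sequence[where f'="\<lambda>N y. blinfun_apply (sum (\<lambda>k. U k y) (Iset N))"])
    show "convex (UNIV :: 'a set)" by simp
    fix N y
    have "((\<lambda>y. sum (\<lambda>k. u k y) (Iset N)) has_derivative (\<lambda>h. sum (\<lambda>k. U k y h) (Iset N))) (at y)"
      by (rule has_derivative_sum) (rule du)
    moreover have "blinfun_apply (sum (\<lambda>k. U k y) (Iset N)) = (\<lambda>h. sum (\<lambda>k. U k y h) (Iset N))"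
      by (rule ext) (simp add: blinfun.sum_left)
    ultimately show "((\<lambda>y. sum (\<lambda>k. u k y) (Iset N)) has_derivative blinfun_apply (sum (\<lambda>k. U k y) (Iset N))) (at y within UNIV)"
      by simp
  next
    fix e :: real assume "e > 0"
    from unif[OF this] show "\<forall>\<^sub>F N in sequentially. \<forall>y\<in>UNIV. \<forall>h. norm (blinfun_apply (sum (\<lambda>k. U k y) (Iset N)) h - blinfun_apply (\<Sum>\<^sub>\<infinity>k. U k y) h) \<le> e * norm h"
    proof eventually_elim
      case (elim N)
      show ?case
      proof (intro ballI allI)
        fix y h
        have "norm (blinfun_apply (sum (\<lambda>k. U k y) (Iset N)) h - blinfun_apply (\<Sum>\<^sub>\<infinity>k. U k y) h)
            = norm (blinfun_apply (sum (\<lambda>k. U k y) (Iset N) - (\<Sum>\<^sub>\<infinity>k. U k y)) h)"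
          by (simp add: blinfun.diff_left)
        also have "\<dots> \<le> norm (sum (\<lambda>k. U k y) (Iset N) - (\<Sum>\<^sub>\<infinity>k. U k y)) * norm h" by (rule norm_blinfun)
        also have "\<dots> \<le> e * norm h"
          using elim[rule_format, of y] by (intro mult_right_mono) (auto simp: norm_minus_commute)
        finally show "norm (blinfun_apply (sum (\<lambda>k. U k y) (Iset N)) h - blinfun_apply (\<Sum>\<^sub>\<infinity>k. U k y) h) \<le> e * norm h" .
      qed
    qed
  next
    show "x \<in> UNIV" by simp
    show "(\<lambda>N. sum (\<lambda>k. u k x) (Iset N)) \<longlonglongrightarrow> (\<Sum>\<^sub>\<infinity>k. u k x)" by (rule limu)
  qed
  then obtain g where g: "\<And>y. (\<lambda>N. sum (\<lambda>k. u k y) (Iset N)) \<longlonglongrightarrow> g y"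
    "\<And>y. (g has_derivative blinfun_apply (\<Sum>\<^sub>\<infinity>k. U k y)) (at y)" by auto
  have "g = (\<lambda>y. \<Sum>\<^sub>\<infinity>k. u k y)" using g(1) limu LIMSEQ_unique by (metis ext)
  thus "((\<lambda>x. \<Sum>\<^sub>\<infinity>k. u k x) has_derivative blinfun_apply (\<Sum>\<^sub>\<infinity>k. U k x)) (at x)" using g(2) by simp
  show "continuous_on UNIV (\<lambda>x. \<Sum>\<^sub>\<infinity>k. U k x)"
  proof (rule uniform_limit_theorem[where f="\<lambda>N y. sum (\<lambda>k. U k y) (Iset N)" and F=sequentially])
    show "\<forall>\<^sub>F N in sequentially. continuous_on UNIV (\<lambda>y. sum (\<lambda>k. U k y) (Iset N))"
      by (intro always_eventually allI continuous_on_sum) (use cU in auto)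
    show "uniform_limit UNIV (\<lambda>N y. sum (\<lambda>k. U k y) (Iset N)) (\<lambda>x. \<Sum>\<^sub>\<infinity>k. U k x) sequentially"
    proof (rule uniform_limitI)
      fix e :: real assume "e > 0"
      from unif[OF this] show "\<forall>\<^sub>F N in sequentially. \<forall>y\<in>UNIV. dist (sum (\<lambda>k. U k y) (Iset N)) (\<Sum>\<^sub>\<infinity>k. U k y) < e"
        by eventually_elim (simp add: dist_norm norm_minus_commute)
    qed
  qed simp
  have nU: "(\<lambda>k. norm (U k x)) summable_on UNIV"
    by (rule abs_cmp[OF sb]) (use bU in auto)
  have "norm (\<Sum>\<^sub>\<infinity>k. U k x) \<le> (\<Sum>\<^sub>\<infinity>k. norm (U k x))" by (rule norm_infsum_bound[OF nU])
  also have "\<dots> \<le> (\<Sum>\<^sub>\<infinity>k. b k)" by (rule infsum_mono[OF nU sb]) (use bU in auto)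
  finally show "norm (\<Sum>\<^sub>\<infinity>k. U k x) \<le> (\<Sum>\<^sub>\<infinity>k. b k)" .
qed




fun fwdT :: "(int \<Rightarrow> 'a \<Rightarrow> 'a) \<Rightarrow> int \<Rightarrow> 'a \<Rightarrow> nat \<Rightarrow> 'a" where
  "fwdT F n \<xi> 0 = \<xi>"
| "fwdT F n \<xi> (Suc m) = F (n + int m) (fwdT F n \<xi> m)"

fun bwdT :: "(int \<Rightarrow> 'a \<Rightarrow> 'a) \<Rightarrow> int \<Rightarrow> 'a \<Rightarrow> nat \<Rightarrow> 'a" where
  "bwdT G n \<xi> 0 = \<xi>"
| "bwdT G n \<xi> (Suc m) = G (n - int m - 1) (bwdT G n \<xi> m)"

definition traj :: "(int \<Rightarrow> 'a \<Rightarrow> 'a) \<Rightarrow> (int \<Rightarrow> 'a \<Rightarrow> 'a) \<Rightarrow> int \<Rightarrow> 'a \<Rightarrow> int \<Rightarrow> 'a" where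
  "traj F G n \<xi> k = (if n \<le> k then fwdT F n \<xi> (nat (k - n)) else bwdT G n \<xi> (nat (n - k)))"

locale setting =
  fixes A :: "int \<Rightarrow> ('a::banach \<Rightarrow>\<^sub>L 'a)" and f :: "int \<Rightarrow> 'a \<Rightarrow> 'a" and \<gamma> :: "int \<Rightarrow> real"
  assumes A_inv: "\<And>n. \<exists>B. A n o\<^sub>L B = id_blinfun \<and> B o\<^sub>L A n = id_blinfun"
    and gamma_nonneg: "\<And>n. \<gamma> n \<ge> 0"
    and f_lip: "\<And>n x1 x2. norm (f n x1 - f n x2) \<le> \<gamma> n * norm (x1 - x2)"
    and inv_gamma: "\<And>n. norm (binv (A n)) * \<gamma> n < 1"
    and f_C1: "\<And>n. C1 (f n)"
begin

lemma AB: "A n o\<^sub>L binv (A n) = id_blinfun" "binv (A n) o\<^sub>L A n = id_blinfun"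
  using A_inv[of n] binv_props by blast+

lemma ABx: "A n (binv (A n) y) = y" "binv (A n) (A n y) = y"
  using AB[of n] by (metis blinfun_apply_blinfun_compose blinfun_apply_id_blinfun)+

definition Df where "Df n = (SOME D. (\<forall>x. (f n has_derivative blinfun_apply (D x)) (at x)) \<and> continuous_on UNIV D)"

lemma Df: "(f n has_derivative blinfun_apply (Df n x)) (at x)" "continuous_on UNIV (Df n)"
proof -
  have "\<exists>D. (\<forall>x. (f n has_derivative blinfun_apply (D x)) (at x)) \<and> continuous_on UNIV D"
    using f_C1[of n] by (simp add: C1_def)
  from someI_ex[OF this] show "(f n has_derivative blinfun_apply (Df n x)) (at x)" "continuous_on UNIV (Df n)"
    unfolding Df_def by auto
qed

lemma Df_bound: "norm (Df n x) \<le> \<gamma> n"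
  by (rule deriv_norm_le_lip[OF Df(1) f_lip gamma_nonneg])

definition ratio where "ratio k = norm (binv (A k)) / (1 - \<gamma> k * norm (binv (A k)))"

lemma ratio_nonneg: "ratio k \<ge> 0"
  using inv_gamma[of k] by (simp add: ratio_def mult.commute)

definition FF where "FF k x = A k x + f k x"

definition Phi where "Phi k x = x + binv (A k) (f k x)"

lemma Phi_lip: "norm (binv (A k) (f k a) - binv (A k) (f k b)) \<le> (norm (binv (A k)) * \<gamma> k) * norm (a - b)"
proof -
  have "binv (A k) (f k a) - binv (A k) (f k b) = binv (A k) (f k a - f k b)" by (simp add: blinfun.diff_right)
  also have "norm \<dots> \<le> norm (binv (A k)) * norm (f k a - f k b)" by (rule norm_blinfun)
  also have "\<dots> \<le> norm (binv (A k)) * (\<gamma> k * norm (a - b))" by (intro mult_left_mono f_lip) simp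
  finally show ?thesis by (simp add: mult.assoc)
qed

lemma Phi_bij: "bij (Phi k)"
  and Phi_inv_lip: "norm (inv (Phi k) y1 - inv (Phi k) y2) \<le> 1 / (1 - norm (binv (A k)) * \<gamma> k) * norm (y1 - y2)"
proof -
  have c: "0 \<le> norm (binv (A k)) * \<gamma> k" "norm (binv (A k)) * \<gamma> k < 1" using inv_gamma gamma_nonneg by auto
  have e: "Phi k = (\<lambda>x. x + binv (A k) (f k x))" by (simp add: Phi_def fun_eq_iff)
  show "bij (Phi k)" unfolding e by (rule idcontr_bij(1)[OF c Phi_lip])
  show "norm (inv (Phi k) y1 - inv (Phi k) y2) \<le> 1 / (1 - norm (binv (A k)) * \<gamma> k) * norm (y1 - y2)"
    unfolding e by (rule idcontr_bij(2)[OF c Phi_lip])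
qed

lemma FF_Phi: "FF k x = A k (Phi k x)"
  by (simp add: FF_def Phi_def blinfun.add_right ABx)

definition Finv where "Finv k y = inv (Phi k) (binv (A k) y)"

lemma FF_Finv[simp]: "FF k (Finv k y) = y"
proof -
  have "Phi k (Finv k y) = binv (A k) y" unfolding Finv_def
    by (meson Phi_bij bij_is_surj surj_f_inv_f)
  thus ?thesis by (simp add: FF_Phi ABx)
qed

lemma Finv_FF[simp]: "Finv k (FF k x) = x"
  unfolding Finv_def FF_Phi ABx by (meson Phi_bij bij_is_inj inv_f_f)

lemma Finv_cont: "continuous_on UNIV (Finv k)"
proof -
  define L where "L = 1 / (1 - norm (binv (A k)) * \<gamma> k) * norm (binv (A k))"
  have L0: "0 \<le> L" unfolding L_def using inv_gamma[of k] by simp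
  have "L-lipschitz_on UNIV (Finv k)"
  proof (rule lipschitz_onI[OF _ L0])
    fix x y :: 'a
    have "dist (Finv k x) (Finv k y) \<le> 1 / (1 - norm (binv (A k)) * \<gamma> k) * norm (binv (A k) x - binv (A k) y)"
      unfolding Finv_def dist_norm by (rule Phi_inv_lip)
    also have "\<dots> \<le> 1 / (1 - norm (binv (A k)) * \<gamma> k) * (norm (binv (A k)) * norm (x - y))"
      using inv_gamma[of k] by (intro mult_left_mono) (auto simp: norm_blinfun blinfun.diff_right[symmetric])
    finally show "dist (Finv k x) (Finv k y) \<le> L * dist x y" by (simp add: L_def dist_norm mult.assoc)
  qed
  thus ?thesis by (rule lipschitz_on_continuous_on)
qed

lemma FF_deriv: "(FF k has_derivative blinfun_apply (A k + Df k x)) (at x)"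
proof -
  have "((\<lambda>x. A k x + f k x) has_derivative (\<lambda>h. A k h + Df k x h)) (at x)"
    by (intro has_derivative_add Df(1) bounded_linear_imp_has_derivative blinfun.bounded_linear_right)
  moreover have "(\<lambda>h. A k h + Df k x h) = blinfun_apply (A k + Df k x)" by (simp add: fun_eq_iff blinfun.add_left)
  ultimately show ?thesis by (simp add: FF_def[abs_def])
qed

lemma DFinv_props:
  "(A k + Df k x) o\<^sub>L binv (A k + Df k x) = id_blinfun"
  "binv (A k + Df k x) o\<^sub>L (A k + Df k x) = id_blinfun"
  "norm (binv (A k + Df k x)) \<le> ratio k"
proof -
  have sm: "norm (binv (A k)) * norm (Df k x) \<le> norm (binv (A k)) * \<gamma> k"
    by (intro mult_left_mono Df_bound) simp
  hence sm1: "norm (binv (A k)) * norm (Df k x) < 1" using inv_gamma[of k] by linarith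
  note ip = inv_perturb[OF AB sm1]
  show "(A k + Df k x) o\<^sub>L binv (A k + Df k x) = id_blinfun"
    "binv (A k + Df k x) o\<^sub>L (A k + Df k x) = id_blinfun" using ip by auto
  have p1: "0 < 1 - norm (binv (A k)) * norm (Df k x)" using sm1 by linarith
  have p2: "0 < 1 - \<gamma> k * norm (binv (A k))" using inv_gamma[of k] by (simp add: mult.commute)
  have "norm (binv (A k)) / (1 - norm (binv (A k)) * norm (Df k x)) \<le> norm (binv (A k)) / (1 - \<gamma> k * norm (binv (A k)))"
  proof (rule divide_left_mono)
    show "1 - \<gamma> k * norm (binv (A k)) \<le> 1 - norm (binv (A k)) * norm (Df k x)" using sm by (simp add: mult.commute)
    show "0 \<le> norm (binv (A k))" by simp
    show "0 < (1 - norm (binv (A k)) * norm (Df k x)) * (1 - \<gamma> k * norm (binv (A k)))" using p1 p2 by simp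
  qed
  hence "norm (binv (A k)) / (1 - norm (binv (A k)) * norm (Df k x)) \<le> ratio k" by (simp add: ratio_def)
  thus "norm (binv (A k + Df k x)) \<le> ratio k" using ip(3) by linarith
qed

lemma Finv_deriv: "(Finv k has_derivative blinfun_apply (binv (A k + Df k (Finv k y)))) (at y)"
proof (rule has_derivative_inverse_basic[where f="FF k" and T=UNIV])
  show "(FF k has_derivative blinfun_apply (A k + Df k (Finv k y))) (at (Finv k y))" by (rule FF_deriv)
  show "bounded_linear (blinfun_apply (binv (A k + Df k (Finv k y))))" by (rule blinfun.bounded_linear_right)
  show "blinfun_apply (binv (A k + Df k (Finv k y))) \<circ> blinfun_apply (A k + Df k (Finv k y)) = id"
  proof -
    have "binv (A k + Df k (Finv k y)) ((A k + Df k (Finv k y)) h) = h" for h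
      using DFinv_props(2)[of k "Finv k y"] by (metis blinfun_apply_blinfun_compose blinfun_apply_id_blinfun)
    thus ?thesis by (simp add: fun_eq_iff)
  qed
  show "continuous (at y) (Finv k)" using Finv_cont continuous_on_eq_continuous_at by blast
qed auto

lemma DFinv_cont: "continuous_on UNIV (\<lambda>y. binv (A k + Df k (Finv k y)))"
proof (rule cont_binv[where K="ratio k"])
  show "continuous_on UNIV (\<lambda>y. A k + Df k (Finv k y))"
    by (rule continuous_on_add[OF continuous_on_const continuous_on_compose2[OF Df(2) Finv_cont]]) auto
qed (use DFinv_props in auto)

abbreviation tr where "tr n \<xi> k \<equiv> traj FF Finv n \<xi> k"

lemma tr_n: "tr n \<xi> n = \<xi>" by (simp add: traj_def)

lemma tr_rec: "tr n \<xi> (k + 1) = FF k (tr n \<xi> k)"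
proof (cases "n \<le> k")
  case True
  hence "nat (k + 1 - n) = Suc (nat (k - n))" by simp
  thus ?thesis using True by (simp add: traj_def)
next
  case False
  show ?thesis
  proof (cases "k + 1 = n")
    case True
    hence nn: "nat (n - k) = Suc 0" by simp
    have t1: "tr n \<xi> (k + 1) = \<xi>" using True tr_n by simp
    have t2: "tr n \<xi> k = Finv (n - int 0 - 1) \<xi>" using nn False by (simp add: traj_def)
    have "n - int 0 - 1 = k" using True by simp
    hence "tr n \<xi> k = Finv k \<xi>" using t2 by metis
    thus ?thesis using t1 by simp
  next
    case False2: False
    hence "nat (n - k) = Suc (nat (n - (k + 1)))" using False by simp
    moreover have "n - int (nat (n - (k + 1))) - 1 = k" using False False2 by simp
    ultimately show ?thesis using False False2 by (simp add: traj_def)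
  qed
qed

lemma tr_unique:
  assumes "x n = \<xi>" "\<forall>j. x (j + 1) = A j (x j) + f j (x j)"
  shows "x k = tr n \<xi> k"
proof -
  have rec: "x (j + 1) = FF j (x j)" for j using assms(2) by (simp add: FF_def)
  have up: "x (n + int m) = tr n \<xi> (n + int m)" for m
  proof (induction m)
    case 0 then show ?case using assms(1) tr_n by simp
  next
    case (Suc m)
    have e: "n + int (Suc m) = (n + int m) + 1" by simp
    have "x (n + int (Suc m)) = FF (n + int m) (x (n + int m))" unfolding e by (rule rec)
    also have "\<dots> = FF (n + int m) (tr n \<xi> (n + int m))" using Suc by simp
    also have "\<dots> = tr n \<xi> (n + int (Suc m))" unfolding e by (rule tr_rec[symmetric])
    finally show ?case .
  qed
  have down: "x (n - int m) = tr n \<xi> (n - int m)" for m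
  proof (induction m)
    case 0 then show ?case using assms(1) tr_n by simp
  next
    case (Suc m)
    have "x (n - int m) = FF (n - int (Suc m)) (x (n - int (Suc m)))" using rec[of "n - int (Suc m)"] by simp
    moreover have "tr n \<xi> (n - int m) = FF (n - int (Suc m)) (tr n \<xi> (n - int (Suc m)))"
      using tr_rec[of n \<xi> "n - int (Suc m)"] by simp
    ultimately have "FF (n - int (Suc m)) (x (n - int (Suc m))) = FF (n - int (Suc m)) (tr n \<xi> (n - int (Suc m)))"
      using Suc by simp
    hence "Finv (n - int (Suc m)) (FF (n - int (Suc m)) (x (n - int (Suc m))))
         = Finv (n - int (Suc m)) (FF (n - int (Suc m)) (tr n \<xi> (n - int (Suc m))))" by simp
    thus ?case by simp
  qed
  show ?thesis
  proof (cases "n \<le> k")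
    case True
    hence "k = n + int (nat (k - n))" by simp
    thus ?thesis using up by metis
  next
    case False
    hence "k = n - int (nat (n - k))" by simp
    thus ?thesis using down by metis
  qed
qed

lemma x2_eq: "x2 A f k n \<xi> = tr n \<xi> k"
proof -
  have ex: "(\<lambda>k. tr n \<xi> k) n = \<xi> \<and> (\<forall>j. (\<lambda>k. tr n \<xi> k) (j + 1) = A j ((\<lambda>k. tr n \<xi> k) j) + f j ((\<lambda>k. tr n \<xi> k) j))"
    using tr_n tr_rec by (simp add: FF_def)
  have "(THE x. x n = \<xi> \<and> (\<forall>j. x (j + 1) = A j (x j) + f j (x j))) = (\<lambda>k. tr n \<xi> k)"
  proof (rule the_equality[where a="\<lambda>k. tr n \<xi> k"])
    show "(\<lambda>k. tr n \<xi> k) n = \<xi> \<and> (\<forall>j. (\<lambda>k. tr n \<xi> k) (j + 1) = A j ((\<lambda>k. tr n \<xi> k) j) + f j ((\<lambda>k. tr n \<xi> k) j))"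
      by (rule ex)
    fix x assume "x n = \<xi> \<and> (\<forall>j. x (j + 1) = A j (x j) + f j (x j))"
    thus "x = (\<lambda>k. tr n \<xi> k)" using tr_unique by blast
  qed
  thus ?thesis by (simp add: x2_def)
qed

end



lemma blinfun_apply_compose_fun: "blinfun_apply (X o\<^sub>L Y) = (\<lambda>h. X (Y h))"
  by (rule ext) simp

context setting begin

definition beta where
  "beta n k = (if k < n then (\<Prod>j\<in>{k..n-1}. ratio j) else (\<Prod>j\<in>{n..k-1}. norm (A j) + \<gamma> j))"

lemma fwd_deriv:
  "\<exists>D. (\<forall>\<xi>. ((\<lambda>\<xi>. fwdT FF n \<xi> m) has_derivative blinfun_apply (D \<xi>)) (at \<xi>)) \<and> continuous_on UNIV D
      \<and> (\<forall>\<xi>. norm (D \<xi>) \<le> (\<Prod>j\<in>{n..n + int m - 1}. norm (A j) + \<gamma> j))"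
proof (induction m)
  case 0
  have "((\<lambda>\<xi>. \<xi>) has_derivative blinfun_apply id_blinfun) (at \<xi>)" for \<xi> :: 'a
    by (simp add: id_blinfun.rep_eq has_derivative_ident)
  thus ?case by (intro exI[of _ "\<lambda>_. id_blinfun"]) (auto simp: norm_blinfun_id_le)
next
  case (Suc m)
  then obtain D where D: "\<And>\<xi>. ((\<lambda>\<xi>. fwdT FF n \<xi> m) has_derivative blinfun_apply (D \<xi>)) (at \<xi>)"
    "continuous_on UNIV D" "\<And>\<xi>. norm (D \<xi>) \<le> (\<Prod>j\<in>{n..n + int m - 1}. norm (A j) + \<gamma> j)" by blast
  define k where "k = n + int m"
  define g where "g \<xi> = fwdT FF n \<xi> m" for \<xi>
  have gc: "continuous_on UNIV g"
    unfolding g_def by (rule continuous_at_imp_continuous_on) (use D(1) has_derivative_continuous in blast)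
  define D' where "D' \<xi> = (A k + Df k (g \<xi>)) o\<^sub>L D \<xi>" for \<xi>
  have "((\<lambda>\<xi>. fwdT FF n \<xi> (Suc m)) has_derivative blinfun_apply (D' \<xi>)) (at \<xi>)" for \<xi>
  proof -
    have "((\<lambda>\<xi>. FF k (g \<xi>)) has_derivative (\<lambda>h. blinfun_apply (A k + Df k (g \<xi>)) (D \<xi> h))) (at \<xi>)"
      unfolding g_def by (rule has_derivative_compose[OF D(1) FF_deriv])
    thus ?thesis by (simp add: D'_def g_def k_def blinfun_apply_compose_fun)
  qed
  moreover have "continuous_on UNIV D'"
    unfolding D'_def
    by (rule bounded_bilinear.continuous_on[OF bounded_bilinear_blinfun_compose _ D(2)],
        rule continuous_on_add[OF continuous_on_const continuous_on_compose2[OF Df(2) gc]]) auto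
  moreover have "norm (D' \<xi>) \<le> (\<Prod>j\<in>{n..n + int (Suc m) - 1}. norm (A j) + \<gamma> j)" for \<xi>
  proof -
    have s: "{n..n + int (Suc m) - 1} = insert k {n..n + int m - 1}" by (auto simp: k_def)
    have "norm (D' \<xi>) \<le> norm (A k + Df k (g \<xi>)) * norm (D \<xi>)" unfolding D'_def by (rule norm_blinfun_compose)
    also have "\<dots> \<le> (norm (A k) + \<gamma> k) * (\<Prod>j\<in>{n..n + int m - 1}. norm (A j) + \<gamma> j)"
    proof (rule mult_mono)
      show "norm (A k + Df k (g \<xi>)) \<le> norm (A k) + \<gamma> k"
        using norm_triangle_ineq[of "A k" "Df k (g \<xi>)"] Df_bound[of k "g \<xi>"] by linarith
      show "0 \<le> norm (A k) + \<gamma> k" using gamma_nonneg[of k] by simp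
    qed (use D(3) in auto)
    also have "\<dots> = (\<Prod>j\<in>{n..n + int (Suc m) - 1}. norm (A j) + \<gamma> j)"
      unfolding s by (subst prod.insert) (auto simp: k_def)
    finally show ?thesis .
  qed
  ultimately show ?case by blast
qed

lemma bwd_deriv:
  "\<exists>D. (\<forall>\<xi>. ((\<lambda>\<xi>. bwdT Finv n \<xi> m) has_derivative blinfun_apply (D \<xi>)) (at \<xi>)) \<and> continuous_on UNIV D
      \<and> (\<forall>\<xi>. norm (D \<xi>) \<le> (\<Prod>j\<in>{n - int m..n - 1}. ratio j))"
proof (induction m)
  case 0
  have "((\<lambda>\<xi>. \<xi>) has_derivative blinfun_apply id_blinfun) (at \<xi>)" for \<xi> :: 'a
    by (simp add: id_blinfun.rep_eq has_derivative_ident)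
  thus ?case by (intro exI[of _ "\<lambda>_. id_blinfun"]) (auto simp: norm_blinfun_id_le)
next
  case (Suc m)
  then obtain D where D: "\<And>\<xi>. ((\<lambda>\<xi>. bwdT Finv n \<xi> m) has_derivative blinfun_apply (D \<xi>)) (at \<xi>)"
    "continuous_on UNIV D" "\<And>\<xi>. norm (D \<xi>) \<le> (\<Prod>j\<in>{n - int m..n - 1}. ratio j)" by blast
  define k where "k = n - int m - 1"
  define g where "g \<xi> = bwdT Finv n \<xi> m" for \<xi>
  have gc: "continuous_on UNIV g"
    unfolding g_def by (rule continuous_at_imp_continuous_on) (use D(1) has_derivative_continuous in blast)
  define D' where "D' \<xi> = binv (A k + Df k (Finv k (g \<xi>))) o\<^sub>L D \<xi>" for \<xi>
  have "((\<lambda>\<xi>. bwdT Finv n \<xi> (Suc m)) has_derivative blinfun_apply (D' \<xi>)) (at \<xi>)" for \<xi>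
  proof -
    have "((\<lambda>\<xi>. Finv k (g \<xi>)) has_derivative (\<lambda>h. blinfun_apply (binv (A k + Df k (Finv k (g \<xi>)))) (D \<xi> h))) (at \<xi>)"
      unfolding g_def by (rule has_derivative_compose[OF D(1) Finv_deriv])
    thus ?thesis by (simp add: D'_def g_def k_def blinfun_apply_compose_fun)
  qed
  moreover have "continuous_on UNIV D'"
    unfolding D'_def
    by (rule bounded_bilinear.continuous_on[OF bounded_bilinear_blinfun_compose _ D(2)],
        rule continuous_on_compose2[OF DFinv_cont gc]) auto
  moreover have "norm (D' \<xi>) \<le> (\<Prod>j\<in>{n - int (Suc m)..n - 1}. ratio j)" for \<xi>
  proof -
    have s: "{n - int (Suc m)..n - 1} = insert k {n - int m..n - 1}" by (auto simp: k_def)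
    have "norm (D' \<xi>) \<le> norm (binv (A k + Df k (Finv k (g \<xi>)))) * norm (D \<xi>)" unfolding D'_def by (rule norm_blinfun_compose)
    also have "\<dots> \<le> ratio k * (\<Prod>j\<in>{n - int m..n - 1}. ratio j)"
      by (rule mult_mono) (use DFinv_props(3) D(3) ratio_nonneg in auto)
    also have "\<dots> = (\<Prod>j\<in>{n - int (Suc m)..n - 1}. ratio j)"
      unfolding s by (subst prod.insert) (auto simp: k_def)
    finally show ?thesis .
  qed
  ultimately show ?case by blast
qed

lemma tr_deriv:
  "\<exists>D. (\<forall>\<xi>. ((\<lambda>\<xi>. tr n \<xi> k) has_derivative blinfun_apply (D \<xi>)) (at \<xi>)) \<and> continuous_on UNIV D
      \<and> (\<forall>\<xi>. norm (D \<xi>) \<le> beta n k)"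
proof (cases "n \<le> k")
  case True
  have e: "(\<lambda>\<xi>. tr n \<xi> k) = (\<lambda>\<xi>. fwdT FF n \<xi> (nat (k - n)))" using True by (simp add: traj_def)
  have s: "{n..n + int (nat (k - n)) - 1} = {n..k - 1}" using True by simp
  have b: "beta n k = (\<Prod>j\<in>{n..k-1}. norm (A j) + \<gamma> j)" using True by (simp add: beta_def)
  show ?thesis unfolding e b using fwd_deriv[of n "nat (k - n)"] unfolding s .
next
  case False
  have e: "(\<lambda>\<xi>. tr n \<xi> k) = (\<lambda>\<xi>. bwdT Finv n \<xi> (nat (n - k)))" using False by (simp add: traj_def)
  have s: "{n - int (nat (n - k))..n - 1} = {k..n - 1}" using False by simp
  have b: "beta n k = (\<Prod>j\<in>{k..n-1}. ratio j)" using False by (simp add: beta_def)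
  show ?thesis unfolding e b using bwd_deriv[of n "nat (n - k)"] unfolding s .
qed

end



context setting begin

lemma main_n:
  fixes P :: "int \<Rightarrow> ('a \<Rightarrow>\<^sub>L 'a)" and \<mu> :: "int \<Rightarrow> real" and n :: int
  assumes f_bdd: "\<And>n x. norm (f n x) \<le> \<mu> n"
    and sum_mu: "\<exists>M. \<forall>m. (\<lambda>n. norm (green A P m n) * \<mu> (n - 1)) summable_on UNIV
                    \<and> (\<Sum>\<^sub>\<infinity>n. norm (green A P m n) * \<mu> (n - 1)) \<le> M"
    and cond: "(\<lambda>k. norm (green A P n (k + 1)) * \<gamma> k *
             (\<Prod>j\<in>{k..n-1}. norm (binv (A j)) / (1 - \<gamma> j * norm (binv (A j))))) summable_on {..<n}
     \<and> (\<lambda>k. norm (green A P n (k + 1)) * \<gamma> k *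
             (\<Prod>j\<in>{n..k-1}. norm (A j) + \<gamma> j)) summable_on {n<..}
     \<and> (\<Sum>\<^sub>\<infinity>k\<in>{..<n}. norm (green A P n (k + 1)) * \<gamma> k *
             (\<Prod>j\<in>{k..n-1}. norm (binv (A j)) / (1 - \<gamma> j * norm (binv (A j)))))
       + (\<Sum>\<^sub>\<infinity>k\<in>{n<..}. norm (green A P n (k + 1)) * \<gamma> k *
             (\<Prod>j\<in>{n..k-1}. norm (A j) + \<gamma> j))
       + norm (green A P n (n + 1)) * \<gamma> n < 1"
  shows "C1 (H A P f n) \<and> C1 (Hbar A P f n)"
proof -
  have "\<forall>k. \<exists>D. (\<forall>\<xi>. ((\<lambda>\<xi>. tr n \<xi> k) has_derivative blinfun_apply (D \<xi>)) (at \<xi>)) \<and> continuous_on UNIV D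
      \<and> (\<forall>\<xi>. norm (D \<xi>) \<le> beta n k)" using tr_deriv by blast
  from choice[OF this] obtain DX where DX:
    "\<And>k \<xi>. ((\<lambda>\<xi>. tr n \<xi> k) has_derivative blinfun_apply (DX k \<xi>)) (at \<xi>)"
    "\<And>k. continuous_on UNIV (DX k)" "\<And>k \<xi>. norm (DX k \<xi>) \<le> beta n k" by blast
  have trc: "continuous_on UNIV (\<lambda>\<xi>. tr n \<xi> k)" for k
    by (rule continuous_at_imp_continuous_on) (use DX(1) has_derivative_continuous in blast)
  define G where "G k = green A P n (k + 1)" for k
  define u where "u k \<xi> = G k (f k (tr n \<xi> k))" for k \<xi>
  define U where "U k \<xi> = G k o\<^sub>L (Df k (tr n \<xi> k) o\<^sub>L DX k \<xi>)" for k \<xi>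
  define b where "b k = norm (G k) * \<gamma> k * beta n k" for k
  define c where "c k = norm (G k) * \<mu> k" for k
  have du: "(u k has_derivative blinfun_apply (U k \<xi>)) (at \<xi>)" for k \<xi>
  proof -
    have "((\<lambda>\<xi>. f k (tr n \<xi> k)) has_derivative (\<lambda>h. Df k (tr n \<xi> k) (DX k \<xi> h))) (at \<xi>)"
      by (rule has_derivative_compose[OF DX(1) Df(1)])
    from has_derivative_compose[OF this bounded_linear_imp_has_derivative[OF blinfun.bounded_linear_right[of "G k"]]]
    show ?thesis by (simp add: u_def[abs_def] U_def blinfun_apply_compose_fun)
  qed
  have cU: "continuous_on UNIV (U k)" for k
    unfolding U_def[abs_def]
    by (intro bounded_bilinear.continuous_on[OF bounded_bilinear_blinfun_compose] continuous_on_const DX(2)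
        continuous_on_compose2[OF Df(2) trc]) auto
  have bU: "norm (U k \<xi>) \<le> b k" for k \<xi>
  proof -
    have "norm (U k \<xi>) \<le> norm (G k) * norm (Df k (tr n \<xi> k) o\<^sub>L DX k \<xi>)"
      unfolding U_def by (rule norm_blinfun_compose)
    also have "\<dots> \<le> norm (G k) * (\<gamma> k * beta n k)"
    proof (rule mult_left_mono)
      have "norm (Df k (tr n \<xi> k) o\<^sub>L DX k \<xi>) \<le> norm (Df k (tr n \<xi> k)) * norm (DX k \<xi>)" by (rule norm_blinfun_compose)
      also have "\<dots> \<le> \<gamma> k * beta n k" by (rule mult_mono) (use Df_bound DX(3) gamma_nonneg in auto)
      finally show "norm (Df k (tr n \<xi> k) o\<^sub>L DX k \<xi>) \<le> \<gamma> k * beta n k" .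
    qed simp
    finally show ?thesis by (simp add: b_def mult.assoc)
  qed
  have bu: "norm (u k \<xi>) \<le> c k" for k \<xi>
  proof -
    have "norm (u k \<xi>) \<le> norm (G k) * norm (f k (tr n \<xi> k))" unfolding u_def by (rule norm_blinfun)
    also have "\<dots> \<le> norm (G k) * \<mu> k" by (rule mult_left_mono) (use f_bdd in auto)
    finally show ?thesis by (simp add: c_def)
  qed
  have sc: "c summable_on UNIV"
  proof -
    obtain M where "(\<lambda>m. norm (green A P n m) * \<mu> (m - 1)) summable_on UNIV" using sum_mu by blast
    moreover have "range (\<lambda>k::int. k + 1) = UNIV" by (metis surj_def add_diff_cancel diff_add_cancel)
    ultimately have "(\<lambda>m. norm (green A P n m) * \<mu> (m - 1)) summable_on range (\<lambda>k::int. k + 1)" by simp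
    hence "((\<lambda>m. norm (green A P n m) * \<mu> (m - 1)) \<circ> (\<lambda>k::int. k + 1)) summable_on UNIV"
      by (subst summable_on_reindex[symmetric]) (auto simp: inj_on_def)
    moreover have "c = ((\<lambda>m. norm (green A P n m) * \<mu> (m - 1)) \<circ> (\<lambda>k::int. k + 1))"
      by (rule ext) (simp add: c_def G_def)
    ultimately show ?thesis by simp
  qed
  define E1 where "E1 = (\<lambda>k. norm (green A P n (k + 1)) * \<gamma> k *
             (\<Prod>j\<in>{k..n-1}. norm (binv (A j)) / (1 - \<gamma> j * norm (binv (A j)))))"
  define E2 where "E2 = (\<lambda>k. norm (green A P n (k + 1)) * \<gamma> k * (\<Prod>j\<in>{n..k-1}. norm (A j) + \<gamma> j))"
  have cc1: "E1 summable_on {..<n}" using cond[THEN conjunct1] unfolding E1_def .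
  have cc2: "E2 summable_on {n<..}" using cond[THEN conjunct2, THEN conjunct1] unfolding E2_def .
  have cc3: "infsum E1 {..<n} + infsum E2 {n<..} + norm (green A P n (n + 1)) * \<gamma> n < 1"
    using cond[THEN conjunct2, THEN conjunct2] unfolding E1_def E2_def .
  have b1: "b k = E1 k" if "k \<in> {..<n}" for k
    using that by (simp add: b_def G_def beta_def ratio_def E1_def)
  have b2: "b k = E2 k" if "k \<in> {n<..}" for k
    using that by (simp add: b_def G_def beta_def E2_def)
  have b3: "b n = norm (green A P n (n + 1)) * \<gamma> n" by (simp add: b_def G_def beta_def)
  have s1: "b summable_on {..<n}" using summable_on_cong[of "{..<n}" b E1] b1 cc1 by blast
  have s2: "b summable_on {n<..}" using summable_on_cong[of "{n<..}" b E2] b2 cc2 by blast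
  have s2': "b summable_on insert n {n<..}" using s2 by (simp add: summable_on_insert_iff)
  have U3: "UNIV = {..<n} \<union> insert n {n<..}" by auto
  have sb: "b summable_on UNIV" by (subst U3, rule summable_on_Un_disjoint[OF s1 s2']) auto
  have disj: "{..<n} \<inter> insert n {n<..} = {}" by auto
  have "infsum b ({..<n} \<union> insert n {n<..}) = infsum b {..<n} + infsum b (insert n {n<..})"
    by (rule infsum_Un_disjoint[OF s1 s2' disj])
  hence e1: "infsum b UNIV = infsum b {..<n} + infsum b (insert n {n<..})" unfolding U3[symmetric] .
  have e2: "infsum b (insert n {n<..}) = b n + infsum b {n<..}" by (rule infsum_insert[OF s2]) simp
  have "(\<Sum>\<^sub>\<infinity>k. b k) = (\<Sum>\<^sub>\<infinity>k\<in>{..<n}. b k) + (b n + (\<Sum>\<^sub>\<infinity>k\<in>{n<..}. b k))"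
    using e1 e2 by simp
  also have "\<dots> < 1"
  proof -
    have "infsum b {..<n} = infsum E1 {..<n}" using infsum_cong[of "{..<n}" b E1] b1 by blast
    moreover have "infsum b {n<..} = infsum E2 {n<..}" using infsum_cong[of "{n<..}" b E2] b2 by blast
    ultimately show ?thesis using cc3 b3 by linarith
  qed
  finally have q1: "(\<Sum>\<^sub>\<infinity>k. b k) < 1" .
  define q where "q = (\<Sum>\<^sub>\<infinity>k. b k)"
  define S where "S \<xi> = (\<Sum>\<^sub>\<infinity>k. u k \<xi>)" for \<xi>
  define DS where "DS \<xi> = (\<Sum>\<^sub>\<infinity>k. U k \<xi>)" for \<xi>
  note tw = termwise_C1[OF du cU bU sb bu sc]
  have dS: "(S has_derivative blinfun_apply (DS \<xi>)) (at \<xi>)" for \<xi>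
    unfolding S_def[abs_def] DS_def using tw(1) .
  have cDS: "continuous_on UNIV DS" unfolding DS_def[abs_def] using tw(2) .
  have nDS: "norm (DS \<xi>) \<le> q" for \<xi> unfolding DS_def q_def using tw(3) .
  have q0: "0 \<le> q" using nDS[of 0] norm_ge_zero order_trans by blast
  have q1': "q < 1" using q1 by (simp add: q_def)
  have hbar_eq: "hbar A P f n = (\<lambda>\<xi>. - S \<xi>)"
    by (simp add: fun_eq_iff hbar_def S_def u_def G_def x2_eq)
  have Hbar_eq: "Hbar A P f n = (\<lambda>\<xi>. \<xi> + - S \<xi>)"
    by (simp add: fun_eq_iff Hbar_def hbar_eq)
  define DH where "DH \<xi> = id_blinfun + (- DS \<xi>)" for \<xi>
  have dH: "(Hbar A P f n has_derivative blinfun_apply (DH \<xi>)) (at \<xi>)" for \<xi>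
  proof -
    have "((\<lambda>\<xi>. \<xi> + - S \<xi>) has_derivative (\<lambda>h. h + - DS \<xi> h)) (at \<xi>)"
      by (intro has_derivative_add has_derivative_ident has_derivative_minus dS)
    moreover have "(\<lambda>h. h + - DS \<xi> h) = blinfun_apply (DH \<xi>)"
      by (simp add: fun_eq_iff DH_def blinfun.add_left blinfun.minus_left blinfun.diff_left)
    ultimately show ?thesis by (simp add: Hbar_eq)
  qed
  have cDH: "continuous_on UNIV DH"
    unfolding DH_def[abs_def] by (intro continuous_intros cDS)
  have C1Hbar: "C1 (Hbar A P f n)" unfolding C1_def using dH cDH by blast
  have lipS: "norm (- S a - - S b') \<le> q * norm (a - b')" for a b'
  proof -
    have "norm ((\<lambda>\<xi>. - S \<xi>) a - (\<lambda>\<xi>. - S \<xi>) b') \<le> q * norm (a - b')"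
    proof (rule differentiable_bound[where S=UNIV and f'="\<lambda>\<xi>. blinfun_apply (- DS \<xi>)"])
      fix x :: 'a
      have "((\<lambda>\<xi>. - S \<xi>) has_derivative (\<lambda>h. - DS x h)) (at x)" by (intro has_derivative_minus dS)
      thus "((\<lambda>\<xi>. - S \<xi>) has_derivative blinfun_apply (- DS x)) (at x within UNIV)"
        by (simp add: blinfun.minus_left[abs_def])
      show "onorm (blinfun_apply (- DS x)) \<le> q" using nDS[of x] by (simp add: norm_blinfun.rep_eq[symmetric])
    qed auto
    thus ?thesis by simp
  qed
  have bijH: "bij (Hbar A P f n)" unfolding Hbar_eq by (rule idcontr_bij(1)[OF q0 q1' lipS])
  have Heq: "H A P f n = inv (Hbar A P f n)" by (simp add: H_def)
  have Hcont: "continuous_on UNIV (H A P f n)"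
  proof -
    have "(1 / (1 - q))-lipschitz_on UNIV (H A P f n)"
    proof (rule lipschitz_onI)
      fix x y :: 'a
      show "dist (H A P f n x) (H A P f n y) \<le> 1 / (1 - q) * dist x y"
        unfolding Heq Hbar_eq dist_norm by (rule idcontr_bij(2)[OF q0 q1' lipS])
      show "0 \<le> 1 / (1 - q)" using q1' by simp
    qed
    thus ?thesis by (rule lipschitz_on_continuous_on)
  qed
  have HH: "Hbar A P f n (H A P f n z) = z" for z
    unfolding Heq using bijH by (meson bij_is_surj surj_f_inv_f)
  have sm: "norm (id_blinfun :: 'a \<Rightarrow>\<^sub>L 'a) * norm (- DS \<xi>) \<le> q" for \<xi>
  proof -
    have "norm (id_blinfun :: 'a \<Rightarrow>\<^sub>L 'a) * norm (- DS \<xi>) \<le> 1 * q"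
      by (rule mult_mono) (use norm_blinfun_id_le nDS q0 in auto)
    thus ?thesis by simp
  qed
  have sm1: "norm (id_blinfun :: 'a \<Rightarrow>\<^sub>L 'a) * norm (- DS \<xi>) < 1" for \<xi> using sm[of \<xi>] q1' by linarith
  note ip = inv_perturb[OF blinfun_compose_id_left blinfun_compose_id_left sm1]
  have ipb: "norm (binv (DH \<xi>)) \<le> 1 / (1 - q)" for \<xi>
  proof -
    have "norm (binv (DH \<xi>)) \<le> norm (id_blinfun :: 'a \<Rightarrow>\<^sub>L 'a) / (1 - norm (id_blinfun :: 'a \<Rightarrow>\<^sub>L 'a) * norm (- DS \<xi>))"
      unfolding DH_def by (rule ip(3))
    also have "\<dots> \<le> 1 / (1 - q)"
    proof (rule frac_le)
      show "0 \<le> (1::real)" by simp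
      show "norm (id_blinfun :: 'a \<Rightarrow>\<^sub>L 'a) \<le> 1" by (rule norm_blinfun_id_le)
      show "0 < 1 - q" using q1' by simp
      show "1 - q \<le> 1 - norm (id_blinfun :: 'a \<Rightarrow>\<^sub>L 'a) * norm (- DS \<xi>)" using sm[of \<xi>] by simp
    qed
    finally show ?thesis .
  qed
  have DHi1: "DH \<xi> o\<^sub>L binv (DH \<xi>) = id_blinfun" and DHi2: "binv (DH \<xi>) o\<^sub>L DH \<xi> = id_blinfun" for \<xi>
    unfolding DH_def using ip by auto
  have dHinv: "(H A P f n has_derivative blinfun_apply (binv (DH (H A P f n y)))) (at y)" for y
  proof (rule has_derivative_inverse_basic[where f="Hbar A P f n" and T=UNIV])
    show "(Hbar A P f n has_derivative blinfun_apply (DH (H A P f n y))) (at (H A P f n y))" by (rule dH)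
    show "bounded_linear (blinfun_apply (binv (DH (H A P f n y))))" by (rule blinfun.bounded_linear_right)
    show "blinfun_apply (binv (DH (H A P f n y))) \<circ> blinfun_apply (DH (H A P f n y)) = id"
    proof -
      have "binv (DH (H A P f n y)) (DH (H A P f n y) h) = h" for h
        using DHi2[of "H A P f n y"] by (metis blinfun_apply_blinfun_compose blinfun_apply_id_blinfun)
      thus ?thesis by (simp add: fun_eq_iff)
    qed
    show "continuous (at y) (H A P f n)" using Hcont continuous_on_eq_continuous_at by blast
  qed (use HH in auto)
  have cHinv: "continuous_on UNIV (\<lambda>y. binv (DH (H A P f n y)))"
  proof (rule cont_binv[where K="1 / (1 - q)"])
    show "continuous_on UNIV (\<lambda>y. DH (H A P f n y))"
      by (rule continuous_on_compose2[OF cDH Hcont]) auto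
  qed (use DHi1 DHi2 ipb in auto)
  have "C1 (H A P f n)" unfolding C1_def using dHinv cHinv by (intro exI[of _ "\<lambda>y. binv (DH (H A P f n y))"]) auto
  with C1Hbar show ?thesis by simp
qed

end

theorem mainTheorem4:
  fixes A P :: "int \<Rightarrow> ('a::banach \<Rightarrow>\<^sub>L 'a)"
    and f :: "int \<Rightarrow> 'a \<Rightarrow> 'a"
    and \<mu> \<gamma> :: "int \<Rightarrow> real"
  assumes A_inv: "\<And>n. \<exists>B. A n o\<^sub>L B = id_blinfun \<and> B o\<^sub>L A n = id_blinfun"
    and mu_nonneg: "\<And>n. \<mu> n \<ge> 0"
    and gamma_nonneg: "\<And>n. \<gamma> n \<ge> 0"
    and f_bdd: "\<And>n x. norm (f n x) \<le> \<mu> n"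
    and f_lip: "\<And>n x1 x2. norm (f n x1 - f n x2) \<le> \<gamma> n * norm (x1 - x2)"
    and sum_mu: "\<exists>M. \<forall>m. (\<lambda>n. norm (green A P m n) * \<mu> (n - 1)) summable_on UNIV
                    \<and> (\<Sum>\<^sub>\<infinity>n. norm (green A P m n) * \<mu> (n - 1)) \<le> M"
    and sum_gamma: "\<exists>q<1. \<forall>m. (\<lambda>n. norm (green A P m n) * \<gamma> (n - 1)) summable_on UNIV
                    \<and> (\<Sum>\<^sub>\<infinity>n. norm (green A P m n) * \<gamma> (n - 1)) \<le> q"
    and inv_gamma: "\<And>n. norm (binv (A n)) * \<gamma> n < 1"
    and f_C1: "\<And>n. C1 (f n)"
    and cond: "\<And>n.
       (\<lambda>k. norm (green A P n (k + 1)) * \<gamma> k *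
             (\<Prod>j\<in>{k..n-1}. norm (binv (A j)) / (1 - \<gamma> j * norm (binv (A j))))) summable_on {..<n}
     \<and> (\<lambda>k. norm (green A P n (k + 1)) * \<gamma> k *
             (\<Prod>j\<in>{n..k-1}. norm (A j) + \<gamma> j)) summable_on {n<..}
     \<and> (\<Sum>\<^sub>\<infinity>k\<in>{..<n}. norm (green A P n (k + 1)) * \<gamma> k *
             (\<Prod>j\<in>{k..n-1}. norm (binv (A j)) / (1 - \<gamma> j * norm (binv (A j)))))
       + (\<Sum>\<^sub>\<infinity>k\<in>{n<..}. norm (green A P n (k + 1)) * \<gamma> k *
             (\<Prod>j\<in>{n..k-1}. norm (A j) + \<gamma> j))
       + norm (green A P n (n + 1)) * \<gamma> n < 1"
  shows "\<forall>n. C1 (H A P f n) \<and> C1 (Hbar A P f n)"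
proof (intro allI)
  fix n
  interpret setting A f \<gamma>
    by unfold_locales (use A_inv gamma_nonneg f_lip inv_gamma f_C1 in auto)
  show "C1 (H A P f n) \<and> C1 (Hbar A P f n)"
    by (rule main_n[OF f_bdd sum_mu cond])
qed

end
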